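(* In the model of the context, fix a time $t$ and suppose $\rho_\varepsilon(t,\cdot)$ is smooth with $|\rho_e(t,r)|<1$ for all $r$. Then $j_\varepsilon(t,\cdot)\equiv0$ if and only if both standard potentials $\Omega_E^1(t,\cdot)$ and $\Omega_E^2(t,\cdot)$ are constant in $r$. In that case, for any reference point $r_0\in\mathbb{R}$ and all $r\in\mathbb{R}$, $$\Omega_e^1(t,r)=\Omega_e^1(t,r_0)\,\overline{\Delta}(r),\qquad \Omega_e^2(t,r)=\big(\Omega_e^2(t,r_0)-\overline{B}(r)\,\Omega_e^1(t,r_0)\big)\,\overline{\Delta}(r),$$ where $\overline{B}(r)=(B(r)-B(r_0))/B_d$ and $\overline{\Delta}(r)=\Delta(r)/\Delta(r_0)$; the corresponding densities are given by $\rho_{e,i}=-\Omega_e^i\tanh(|\Omega_e|)/|\Omega_e|$ (and $\rho_e=0$ where $\Omega_e=0$), and such a state is stationary ($\partial_t\rho_\varepsilon=0$). In particular, if $\Delta$ is constant then $\Omega_e^1$ is constant in $r$.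
   Context: Model setup. Fix constants $\mu>0$, $B_d>0$, $\Gamma>0$, and smooth functions $B:\mathbb{R}\to\mathbb{R}$ (external field) and $\Delta:\mathbb{R}\to(0,\infty)$ (spin density). The state is given by smooth standard components $\rho_\varepsilon(t,r)=(\rho_{\varepsilon,1},\rho_{\varepsilon,2})$. Polarization-basis components are $\rho_e=P(r)\rho_\varepsilon$ with $P(r)=\frac{1}{\mu\Delta(r)}\begin{pmatrix}1/B_d & B(r)/B_d\\ 0&1\end{pmatrix}$. With $\sigma(p)=\tfrac12\ln4+\tfrac12(p-1)\ln(1-p)-\tfrac12(p+1)\ln(1+p)$ on $[0,1)$, the entropy density is $s=\sigma(|\rho_e|)$ (Euclidean norm) on $|\rho_e|<1$. Standard potentials: $\Omega_E^i=\partial s/\partial\rho_{\varepsilon,i}$; polarization potentials: $\Omega_e^i=\partial s/\partial\rho_{e,i}$ (so $\Omega_E=P^T\Omega_e$). With $H_\varepsilon$ the negative definite Hessian of $s$ with respect to $\rho_\varepsilon$, the current is $j_\varepsilon=-\Gamma H_\varepsilon^{-1}\partial_r\Omega_E$ and the dynamics are $\partial_t\rho_\varepsilon=-\partial_r j_\varepsilon$. *)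

theory Defs
  imports "HOL-Analysis.Analysis"
begin

definition smooth_fun :: "(real \<Rightarrow> real) \<Rightarrow> bool" where
  "smooth_fun f \<longleftrightarrow> (\<forall>n x. ((deriv ^^ n) f) differentiable (at x))"

definition partial :: "(real^2 \<Rightarrow> real) \<Rightarrow> real^2 \<Rightarrow> 2 \<Rightarrow> real" where
  "partial f x i = deriv (\<lambda>h. f (x + h *\<^sub>R axis i 1)) 0"

text \<open>Change of basis matrix P(r) from standard to polarization components.\<close>
definition Pmat :: "real \<Rightarrow> real \<Rightarrow> (real \<Rightarrow> real) \<Rightarrow> (real \<Rightarrow> real) \<Rightarrow> real \<Rightarrow> real^2^2" where
  "Pmat mu Bd B Delta r = (\<chi> i k. (if i = 1 then (if k = 1 then 1 / Bd else B r / Bd)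
                                     else (if k = 1 then 0 else 1)) / (mu * Delta r))"

definition sigma :: "real \<Rightarrow> real" where
  "sigma p = ln 4 / 2 + (p - 1) * ln (1 - p) / 2 - (p + 1) * ln (1 + p) / 2"

definition ent_e :: "real^2 \<Rightarrow> real" where
  "ent_e y = sigma (norm y)"

definition ent_eps :: "real \<Rightarrow> real \<Rightarrow> (real \<Rightarrow> real) \<Rightarrow> (real \<Rightarrow> real) \<Rightarrow> real \<Rightarrow> real^2 \<Rightarrow> real" where
  "ent_eps mu Bd B Delta r x = ent_e (Pmat mu Bd B Delta r *v x)"

definition OmegaE :: "real \<Rightarrow> real \<Rightarrow> (real \<Rightarrow> real) \<Rightarrow> (real \<Rightarrow> real) \<Rightarrow> real \<Rightarrow> real^2 \<Rightarrow> real^2" where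
  "OmegaE mu Bd B Delta r x = (\<chi> i. partial (ent_eps mu Bd B Delta r) x i)"

definition Omegae :: "real^2 \<Rightarrow> real^2" where
  "Omegae y = (\<chi> i. partial ent_e y i)"

definition Heps :: "real \<Rightarrow> real \<Rightarrow> (real \<Rightarrow> real) \<Rightarrow> (real \<Rightarrow> real) \<Rightarrow> real \<Rightarrow> real^2 \<Rightarrow> real^2^2" where
  "Heps mu Bd B Delta r x = (\<chi> i k. partial (\<lambda>z. partial (ent_eps mu Bd B Delta r) z i) x k)"

definition current :: "real \<Rightarrow> real \<Rightarrow> real \<Rightarrow> (real \<Rightarrow> real) \<Rightarrow> (real \<Rightarrow> real)
    \<Rightarrow> (real \<Rightarrow> real^2) \<Rightarrow> real \<Rightarrow> real^2" where
  "current Gam mu Bd B Delta rho r =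
     - Gam *\<^sub>R (matrix_inv (Heps mu Bd B Delta r (rho r))
        *v (\<chi> i. deriv (\<lambda>s. OmegaE mu Bd B Delta s (rho s) $ i) r))"

end

theory Submission
  imports Defs
begin


lemma sigma_deriv:
  assumes "-1 < p" "p < 1"
  shows "(sigma has_real_derivative (- artanh p)) (at p)"
proof -
  have D: "(sigma has_real_derivative ((ln (1 - p) + (p - 1) * (-1 / (1 - p))) / 2
          - (ln (1 + p) + (p + 1) * (1 / (1 + p))) / 2)) (at p)"
    unfolding sigma_def[abs_def] using assms
    apply (auto intro!: derivative_eq_intros)
    using assms apply (simp add: divide_simps)
    apply (simp add: algebra_simps)
    done
  have a1: "(p - 1) / (1 - p) = -1" "(p + 1) / (1 + p) = 1"
    using assms by (auto simp: divide_simps)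
  have E: "(ln (1 - p) + (p - 1) * (-1 / (1 - p))) / 2
          - (ln (1 + p) + (p + 1) * (1 / (1 + p))) / 2 = - artanh p"
    using assms by (simp add: a1 artanh_def ln_div field_simps)
  show ?thesis using D unfolding E .
qed

lemma tanh_artanh_real:
  assumes "-1 < p" "p < 1"
  shows "tanh (artanh p) = (p::real)"
proof -
  have "exp (- 2 * artanh p) = (1 - p) / (1 + p)"
  proof -
    have "- 2 * artanh p = - ln ((1 + p) / (1 - p))" by (simp add: artanh_def)
    then show ?thesis using assms by (simp add: exp_minus)
  qed
  then have "tanh (artanh p) = (1 - (1-p)/(1+p)) / (1 + (1-p)/(1+p))"
    by (simp only: tanh_real_altdef)
  also have "\<dots> = p" using assms by (simp add: divide_simps)
  finally show ?thesis .
qed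

lemma artanh_pos: "0 < p \<Longrightarrow> p < 1 \<Longrightarrow> artanh (p::real) > 0"
  by (simp add: artanh_def)

lemma artanh_over_lim: "((\<lambda>p::real. artanh p / p) \<longlongrightarrow> 1) (at 0)"
proof -
  have "(artanh has_real_derivative 1) (at (0::real))"
    using artanh_real_has_field_derivative[of 0 UNIV] by simp
  then show ?thesis by (simp add: DERIV_def)
qed



definition Om :: "real^2 \<Rightarrow> real^2" where
  "Om y = - ((artanh (norm y) / norm y) *\<^sub>R y)"

definition DOm :: "real^2 \<Rightarrow> real^2 \<Rightarrow> real^2" where
  "DOm y h = (if y = 0 then - h else
     - ((artanh (norm y) / norm y) *\<^sub>R h +
        (((h \<bullet> sgn y) * (1 / (1 - (norm y)\<^sup>2)) * norm y - artanh (norm y) * (h \<bullet> sgn y))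
          / (norm y * norm y)) *\<^sub>R y))"

lemma ent_e_deriv:
  assumes "norm y < 1"
  shows "(ent_e has_derivative (\<lambda>h. Om y \<bullet> h)) (at y)"
proof (cases "y = 0")
  case False
  have N: "(norm has_derivative (\<lambda>h. h \<bullet> sgn y)) (at y)"
    using has_derivative_norm[OF False] .
  have S: "(sigma has_real_derivative (- artanh (norm y))) (at (norm y))"
    using assms norm_ge_zero[of y] by (intro sigma_deriv) linarith+
  have "((\<lambda>x. sigma (norm x)) has_derivative (\<lambda>h. h \<bullet> sgn y * (- artanh (norm y)))) (at y)"
    using DERIV_compose_FDERIV[OF S N] .
  moreover have "(\<lambda>h. h \<bullet> sgn y * (- artanh (norm y))) = (\<lambda>h. Om y \<bullet> h)"
    using False by (auto simp: Om_def sgn_div_norm inner_commute field_simps)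
  ultimately show ?thesis unfolding ent_e_def[abs_def] by simp
next
  case True
  have S: "(sigma has_real_derivative 0) (at 0)"
    using sigma_deriv[of 0] by simp
  then have L: "((\<lambda>q. (sigma (0 + q) - sigma 0) / q) \<longlongrightarrow> 0) (at 0)"
    by (simp add: DERIV_def)
  have F: "filterlim (\<lambda>h::real^2. norm h) (at 0) (at 0)"
    unfolding filterlim_at
    by (auto simp: eventually_at intro!: tendsto_norm_zero tendsto_ident_at) (auto intro: exI[of _ 1])
  have "((\<lambda>h. (sigma (0 + norm h) - sigma 0) / norm h) \<longlongrightarrow> 0) (at (0::real^2))"
    using filterlim_compose[OF L F] .
  then have "((\<lambda>h. \<bar>(sigma (0 + norm h) - sigma 0) / norm h\<bar>) \<longlongrightarrow> 0) (at (0::real^2))"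
    using tendsto_rabs_zero by blast
  then have "((\<lambda>h. norm (ent_e (0 + h) - ent_e 0 - Om 0 \<bullet> h) / norm h) \<longlongrightarrow> 0) (at (0::real^2))"
    by (simp add: ent_e_def Om_def)
  moreover have "bounded_linear (\<lambda>h. Om 0 \<bullet> h)"
    by (simp add: bounded_linear_inner_right)
  ultimately show ?thesis using True by (simp add: has_derivative_at)
qed

lemma Om_deriv:
  assumes "norm y < 1"
  shows "(Om has_derivative DOm y) (at y)"
proof (cases "y = 0")
  case False
  let ?p = "norm y"
  have N: "(norm has_derivative (\<lambda>h. h \<bullet> sgn y)) (at y)"
    using has_derivative_norm[OF False] .
  have S: "(artanh has_real_derivative (1 / (1 - ?p\<^sup>2))) (at ?p)"
    using assms norm_ge_zero[of y] by (intro artanh_real_has_field_derivative) auto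
  have A: "((\<lambda>x. artanh (norm x)) has_derivative (\<lambda>h. h \<bullet> sgn y * (1 / (1 - ?p\<^sup>2)))) (at y)"
    using DERIV_compose_FDERIV[OF S N] .
  have Q: "((\<lambda>x. artanh (norm x) / norm x) has_derivative
      (\<lambda>h. ((h \<bullet> sgn y * (1 / (1 - ?p\<^sup>2))) * ?p - artanh ?p * (h \<bullet> sgn y)) / (?p * ?p))) (at y)"
    using has_derivative_divide'[OF A N] False by simp
  have "((\<lambda>x. - ((artanh (norm x) / norm x) *\<^sub>R x)) has_derivative
     (\<lambda>h. - ((artanh ?p / ?p) *\<^sub>R h +
        (((h \<bullet> sgn y * (1 / (1 - ?p\<^sup>2))) * ?p - artanh ?p * (h \<bullet> sgn y)) / (?p * ?p)) *\<^sub>R y))) (at y)"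
    by (intro has_derivative_minus has_derivative_scaleR[OF Q has_derivative_ident])
  then show ?thesis using False unfolding Om_def[abs_def] DOm_def by simp
next
  case True
  have F: "filterlim (\<lambda>h::real^2. norm h) (at 0) (at 0)"
    unfolding filterlim_at
    by (auto simp: eventually_at intro!: tendsto_norm_zero tendsto_ident_at) (auto intro: exI[of _ 1])
  have "((\<lambda>h. artanh (norm h) / norm h) \<longlongrightarrow> 1) (at (0::real^2))"
    using filterlim_compose[OF artanh_over_lim F] .
  then have "((\<lambda>h. 1 - artanh (norm h) / norm h) \<longlongrightarrow> 1 - 1) (at (0::real^2))"
    by (intro tendsto_diff tendsto_const)
  then have "((\<lambda>h. \<bar>1 - artanh (norm h) / norm h\<bar>) \<longlongrightarrow> \<bar>1 - 1\<bar>) (at (0::real^2))"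
    by (rule tendsto_rabs)
  then have "((\<lambda>h. \<bar>1 - artanh (norm h) / norm h\<bar>) \<longlongrightarrow> 0) (at (0::real^2))"
    by simp
  moreover have "\<forall>\<^sub>F h in at (0::real^2). \<bar>1 - artanh (norm h) / norm h\<bar> = norm (Om (0 + h) - Om 0 - DOm 0 h) / norm h"
  proof (rule eventually_at_filter[THEN iffD2], intro always_eventually allI impI)
    fix h :: "real^2" assume "h \<noteq> 0"
    have "Om (0 + h) - Om 0 - DOm 0 h = (1 - artanh (norm h) / norm h) *\<^sub>R h"
      by (simp add: Om_def DOm_def algebra_simps)
    then show "\<bar>1 - artanh (norm h) / norm h\<bar> = norm (Om (0 + h) - Om 0 - DOm 0 h) / norm h"
      using \<open>h \<noteq> 0\<close> by simp
  qed
  ultimately have "((\<lambda>h. norm (Om (0 + h) - Om 0 - DOm 0 h) / norm h) \<longlongrightarrow> 0) (at (0::real^2))"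
    by (rule Lim_transform_eventually)
  moreover have "bounded_linear (DOm 0)"
  proof -
    have "DOm 0 = (\<lambda>h. -h)" by (simp add: DOm_def fun_eq_iff)
    then show ?thesis using bounded_linear_minus[OF bounded_linear_ident] by simp
  qed
  ultimately show ?thesis using True by (simp add: has_derivative_at)
qed

lemma DOm_inj:
  assumes "norm y < 1" "DOm y h = 0"
  shows "h = 0"
proof (cases "y = 0")
  case True then show ?thesis using assms by (simp add: DOm_def)
next
  case False
  let ?p = "norm y" and ?s = "h \<bullet> sgn y" and ?a = "artanh (norm y)"
  have p: "0 < ?p" "?p < 1" using False assms by auto
  have a: "?a > 0" using artanh_pos p by blast
  have q: "1 - ?p\<^sup>2 > 0" using p by (simp add: power_less_one_iff abs_square_less_1)
  have yh: "y \<bullet> h = ?s * ?p" using False by (simp add: sgn_div_norm inner_commute)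
  have yy: "y \<bullet> y = ?p * ?p" by (simp add: power2_eq_square[symmetric] dot_square_norm)
  have "y \<bullet> DOm y h = - (?a / ?p * (y \<bullet> h) +
        ((?s * (1 / (1 - ?p\<^sup>2)) * ?p - ?a * ?s) / (?p * ?p)) * (y \<bullet> y))"
    using False by (simp add: DOm_def inner_add_right inner_diff_right inner_minus_right)
  also have "\<dots> = - (?s * ?p / (1 - ?p\<^sup>2))"
    unfolding yh yy using p q by (simp add: field_simps power2_eq_square)
  finally have "?s * ?p / (1 - ?p\<^sup>2) = 0" using assms by simp
  with q have s0: "?s = 0" using p by simp
  have "DOm y h = - ((?a / ?p) *\<^sub>R h)" using False by (simp add: DOm_def s0)
  then show ?thesis using assms a p by simp
qed



lemma partial_has_derivative:
  assumes "(f has_derivative f') (at x)"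
  shows "partial f x i = f' (axis i 1)"
proof -
  let ?v = "axis i 1 :: real^2"
  have g: "((\<lambda>h::real. x + h *\<^sub>R ?v) has_derivative (\<lambda>h. h *\<^sub>R ?v)) (at 0)"
    by (auto intro!: derivative_eq_intros)
  have f0: "(f has_derivative f') (at (x + 0 *\<^sub>R ?v))" using assms by simp
  have "((\<lambda>h. f (x + h *\<^sub>R ?v)) has_derivative (\<lambda>h. f' (h *\<^sub>R ?v))) (at 0)"
    using has_derivative_compose[OF g f0] by simp
  moreover have "(\<lambda>h. f' (h *\<^sub>R ?v)) = (*) (f' ?v)"
    using has_derivative_bounded_linear[OF assms]
    by (auto simp: fun_eq_iff linear_simps)
  ultimately have "((\<lambda>h. f (x + h *\<^sub>R ?v)) has_real_derivative (f' ?v)) (at 0)"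
    by (simp add: has_field_derivative_def)
  then show ?thesis unfolding partial_def by (rule DERIV_imp_deriv)
qed

lemma partial_transform:
  assumes "(g has_derivative g') (at x)" "open S" "x \<in> S" "\<And>z. z \<in> S \<Longrightarrow> f z = g z"
  shows "partial f x i = g' (axis i 1)"
proof -
  have "(f has_derivative g') (at x)"
    using has_derivative_transform_within_open[OF assms(1) assms(2) assms(3)] assms(4) by metis
  then show ?thesis by (rule partial_has_derivative)
qed

lemma Omegae_eq: "norm y < 1 \<Longrightarrow> Omegae y = Om y"
  unfolding Omegae_def vec_eq_iff
  by (auto simp: partial_has_derivative[OF ent_e_deriv] inner_axis)

lemma Pv:
  "(Pmat mu Bd B Delta r *v x) $ 1 = (x$1 + B r * x$2) / (Bd * (mu * Delta r))"
  "(Pmat mu Bd B Delta r *v x) $ 2 = x$2 / (mu * Delta r)"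
  by (simp_all add: matrix_vector_mult_def sum_2 Pmat_def add_divide_distrib)

lemma PTv:
  "(transpose (Pmat mu Bd B Delta r) *v w) $ 1 = w$1 / (Bd * (mu * Delta r))"
  "(transpose (Pmat mu Bd B Delta r) *v w) $ 2 = (B r * w$1 / Bd + w$2) / (mu * Delta r)"
  by (simp_all add: matrix_vector_mult_def sum_2 Pmat_def transpose_def add_divide_distrib)

lemma vec2_eq0: "(w::real^2) = 0 \<longleftrightarrow> w$1 = 0 \<and> w$2 = 0"
  by (auto simp: vec_eq_iff forall_2)

lemma P_inj:
  assumes "mu > 0" "Bd > 0" "Delta r > 0" "Pmat mu Bd B Delta r *v h = 0"
  shows "h = 0"
  using assms unfolding vec2_eq0 Pv by (auto simp: field_simps)

lemma PT_inj:
  assumes "mu > 0" "Bd > 0" "Delta r > 0" "transpose (Pmat mu Bd B Delta r) *v h = 0"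
  shows "h = 0"
  using assms unfolding vec2_eq0 PTv by (auto simp: field_simps)

definition OE :: "real \<Rightarrow> real \<Rightarrow> (real \<Rightarrow> real) \<Rightarrow> (real \<Rightarrow> real) \<Rightarrow> real \<Rightarrow> real^2 \<Rightarrow> real^2" where
  "OE mu Bd B Delta r x = transpose (Pmat mu Bd B Delta r) *v Om (Pmat mu Bd B Delta r *v x)"

lemma ent_eps_deriv:
  assumes "norm (Pmat mu Bd B Delta r *v x) < 1"
  shows "(ent_eps mu Bd B Delta r has_derivative (\<lambda>h. OE mu Bd B Delta r x \<bullet> h)) (at x)"
proof -
  let ?P = "Pmat mu Bd B Delta r"
  have "((\<lambda>x. ent_e (?P *v x)) has_derivative (\<lambda>h. Om (?P *v x) \<bullet> (?P *v h))) (at x)"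
    using has_derivative_compose[OF bounded_linear.has_derivative[OF matrix_vector_mul_bounded_linear[of ?P]
        has_derivative_ident] ent_e_deriv[OF assms]] by simp
  moreover have "(\<lambda>h. Om (?P *v x) \<bullet> (?P *v h)) = (\<lambda>h. OE mu Bd B Delta r x \<bullet> h)"
    by (simp add: OE_def dot_lmul_matrix[symmetric] fun_eq_iff)
  ultimately show ?thesis unfolding ent_eps_def[abs_def] by simp
qed

lemma OmegaE_eq:
  assumes "norm (Pmat mu Bd B Delta r *v x) < 1"
  shows "OmegaE mu Bd B Delta r x = OE mu Bd B Delta r x"
  unfolding OmegaE_def vec_eq_iff
  by (auto simp: partial_has_derivative[OF ent_eps_deriv[OF assms]] inner_axis)

lemma OE_deriv:
  assumes "norm (Pmat mu Bd B Delta r *v x) < 1"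
  shows "(OE mu Bd B Delta r has_derivative
     (\<lambda>h. transpose (Pmat mu Bd B Delta r) *v DOm (Pmat mu Bd B Delta r *v x) (Pmat mu Bd B Delta r *v h))) (at x)"
proof -
  let ?P = "Pmat mu Bd B Delta r"
  have "((\<lambda>x. Om (?P *v x)) has_derivative (\<lambda>h. DOm (?P *v x) (?P *v h))) (at x)"
    using has_derivative_compose[OF bounded_linear.has_derivative[OF matrix_vector_mul_bounded_linear[of ?P]
        has_derivative_ident] Om_deriv[OF assms]] by simp
  from bounded_linear.has_derivative[OF matrix_vector_mul_bounded_linear[of "transpose ?P"] this]
  show ?thesis unfolding OE_def[abs_def] by simp
qed

lemma Heps_invertible:
  assumes mu: "mu > 0" and Bd: "Bd > 0" and D: "Delta r > 0"
    and x: "norm (Pmat mu Bd B Delta r *v x) < 1"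
  shows "invertible (Heps mu Bd B Delta r x)"
proof -
  let ?P = "Pmat mu Bd B Delta r"
  define L where "L = (\<lambda>h. transpose ?P *v DOm (?P *v x) (?P *v h))"
  have dL: "(OE mu Bd B Delta r has_derivative L) (at x)"
    unfolding L_def by (rule OE_deriv[OF x])
  have bl: "bounded_linear L" using has_derivative_bounded_linear[OF dL] .
  define U where "U = {z. norm (?P *v z) < 1}"
  have U: "open U" unfolding U_def
    by (intro open_Collect_less continuous_intros linear_continuous_on matrix_vector_mul_bounded_linear)
  have xU: "x \<in> U" using x by (simp add: U_def)
  have H: "Heps mu Bd B Delta r x = matrix L"
  proof -
    have "Heps mu Bd B Delta r x $ i $ k = L (axis k 1) $ i" for i k
    proof -
      have d: "((\<lambda>z. OE mu Bd B Delta r z $ i) has_derivative (\<lambda>h. L h $ i)) (at x)"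
        using bounded_linear.has_derivative[OF bounded_linear_vec_nth[of i] dL] .
      have e: "partial (ent_eps mu Bd B Delta r) z i = OE mu Bd B Delta r z $ i" if "z \<in> U" for z
        using OmegaE_eq[of mu Bd B Delta r z] that unfolding U_def OmegaE_def by (simp add: vec_eq_iff)
      show ?thesis unfolding Heps_def
        using partial_transform[OF d U xU, of "\<lambda>z. partial (ent_eps mu Bd B Delta r) z i" k] e by simp
    qed
    then show ?thesis by (simp add: vec_eq_iff matrix_def)
  qed
  have inj: "h = 0" if "matrix L *v h = 0" for h
  proof -
    have "L h = 0" using that matrix_vector_mul(3)[OF bl] by metis
    then have "DOm (?P *v x) (?P *v h) = 0" unfolding L_def using PT_inj[of mu Bd Delta r B, OF mu Bd D] by blast
    then have "?P *v h = 0" using DOm_inj[OF x] by blast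
    then show "h = 0" using P_inj[of mu Bd Delta r B, OF mu Bd D] by blast
  qed
  show ?thesis unfolding H invertible_left_inverse matrix_left_invertible_ker using inj by blast
qed



lemma matrix_inv_zero:
  fixes A :: "real^2^2"
  assumes "invertible A" "matrix_inv A *v v = 0"
  shows "v = 0"
proof -
  obtain A' where "A ** A' = mat 1 \<and> A' ** A = mat 1" using assms(1) unfolding invertible_def by blast
  then have "A ** matrix_inv A = mat 1 \<and> matrix_inv A ** A = mat 1"
    unfolding matrix_inv_def by (rule someI)
  then have "v = A *v (matrix_inv A *v v)"
    by (simp add: matrix_vector_mul_assoc)
  then show ?thesis using assms(2) by simp
qed

lemma tanh_part:
  assumes "norm y < 1"
  shows "let w = Om y in (if w = 0 then y = 0 else y = - (tanh (norm w) / norm w) *\<^sub>R w)"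
proof (cases "y = 0")
  case True then show ?thesis by (simp add: Om_def)
next
  case False
  let ?p = "norm y" let ?a = "artanh ?p"
  have p: "0 < ?p" "?p < 1" using False assms by auto
  have a: "?a > 0" using artanh_pos p by blast
  have w: "Om y = - ((?a / ?p) *\<^sub>R y)" by (simp add: Om_def)
  have nw: "norm (Om y) = ?a" unfolding w using p a by simp
  have t: "tanh ?a = ?p" using p by (intro tanh_artanh_real) linarith+
  have "Om y \<noteq> 0" using nw a by auto
  moreover have "y = - (tanh (norm (Om y)) / norm (Om y)) *\<^sub>R Om y"
    unfolding nw t unfolding w using p a by simp
  ultimately show ?thesis by (simp add: Let_def)
qed

lemma smooth_diff: "smooth_fun f \<Longrightarrow> f differentiable (at x)"
  unfolding smooth_fun_def by (metis funpow_0)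

lemma const_of_deriv0:
  fixes f :: "real \<Rightarrow> real"
  assumes "\<And>x. f differentiable (at x)" "\<And>x. deriv f x = 0"
  shows "\<exists>c. \<forall>x. f x = c"
proof -
  have "\<forall>x. DERIV f x :> 0" using assms DERIV_deriv_iff_real_differentiable by metis
  then show ?thesis using DERIV_isconst_all by blast
qed



theorem mainTheorem5:
  fixes mu Bd Gam t :: real
    and B Delta :: "real \<Rightarrow> real"
    and rho :: "real \<Rightarrow> real \<Rightarrow> real^2"
  assumes mu: "mu > 0" and Bd: "Bd > 0" and Gam: "Gam > 0"
    and smB: "smooth_fun B" and smD: "smooth_fun Delta" and Dpos: "\<forall>r. Delta r > 0"
    and smrho: "\<forall>i. smooth_fun (\<lambda>r. rho t r $ i)"
    and inside: "\<forall>r. norm (Pmat mu Bd B Delta r *v rho t r) < 1"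
    and dyn: "\<forall>r. ((\<lambda>s. rho s r) has_vector_derivative
               (\<chi> i. - deriv (\<lambda>r'. current Gam mu Bd B Delta (rho t) r' $ i) r)) (at t)"
  shows "((\<forall>r. current Gam mu Bd B Delta (rho t) r = 0) \<longleftrightarrow>
            ((\<exists>c. \<forall>r. OmegaE mu Bd B Delta r (rho t r) $ 1 = c) \<and>
             (\<exists>c. \<forall>r. OmegaE mu Bd B Delta r (rho t r) $ 2 = c)))
       \<and> ((\<forall>r. current Gam mu Bd B Delta (rho t) r = 0) \<longrightarrow>
            (\<forall>r0 r.
               Omegae (Pmat mu Bd B Delta r *v rho t r) $ 1
                 = Omegae (Pmat mu Bd B Delta r0 *v rho t r0) $ 1 * (Delta r / Delta r0)
             \<and> Omegae (Pmat mu Bd B Delta r *v rho t r) $ 2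
                 = (Omegae (Pmat mu Bd B Delta r0 *v rho t r0) $ 2
                    - ((B r - B r0) / Bd) * Omegae (Pmat mu Bd B Delta r0 *v rho t r0) $ 1)
                   * (Delta r / Delta r0))
          \<and> (\<forall>r. let y = Pmat mu Bd B Delta r *v rho t r; w = Omegae y in
                 (if w = 0 then y = 0 else y = - (tanh (norm w) / norm w) *\<^sub>R w))
          \<and> (\<forall>r. ((\<lambda>s. rho s r) has_vector_derivative 0) (at t))
          \<and> ((\<exists>d. \<forall>r. Delta r = d) \<longrightarrow>
               (\<exists>c. \<forall>r. Omegae (Pmat mu Bd B Delta r *v rho t r) $ 1 = c)))"
proof -
  define y where "y s = Pmat mu Bd B Delta s *v rho t s" for s
  define w where "w s = Om (y s)" for s
  define Oc where "Oc s = OmegaE mu Bd B Delta s (rho t s)" for s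
  have yin: "norm (y s) < 1" for s using inside by (simp add: y_def)
  have Oe: "Omegae (Pmat mu Bd B Delta s *v rho t s) = w s" for s
    using Omegae_eq[OF yin] by (simp add: w_def y_def)
  have O1: "Oc s $ 1 = w s $ 1 / (Bd * (mu * Delta s))" for s
    using OmegaE_eq[OF inside[rule_format, of s]] by (simp add: Oc_def OE_def PTv w_def y_def del: transpose_matrix_vector)
  have O2: "Oc s $ 2 = (B s * w s $ 1 / Bd + w s $ 2) / (mu * Delta s)" for s
    using OmegaE_eq[OF inside[rule_format, of s]] by (simp add: Oc_def OE_def PTv w_def y_def del: transpose_matrix_vector)
  have dB: "B differentiable (at s)" for s using smB by (rule smooth_diff)
  have dD: "Delta differentiable (at s)" for s using smD by (rule smooth_diff)
  have dr: "(\<lambda>r. rho t r $ i) differentiable (at s)" for s i using smrho by (intro smooth_diff) auto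
  have Dne: "Delta s \<noteq> 0" for s using Dpos by (metis less_irrefl)
  have yform: "y = (\<lambda>s. ((rho t s $ 1 + B s * rho t s $ 2) / (Bd * (mu * Delta s))) *\<^sub>R axis 1 1
                    + (rho t s $ 2 / (mu * Delta s)) *\<^sub>R axis 2 1)"
    by (simp add: fun_eq_iff vec_eq_iff forall_2 y_def Pv axis_def)
  have dy: "y differentiable (at s)" for s
  proof -
    have a: "(\<lambda>s. (rho t s $ 1 + B s * rho t s $ 2) / (Bd * (mu * Delta s))) differentiable (at s)"
      using mu Bd Dne[of s]
      by (intro differentiable_divide differentiable_add differentiable_mult dr dB dD differentiable_const) simp
    have b: "(\<lambda>s. rho t s $ 2 / (mu * Delta s)) differentiable (at s)"
      using mu Bd Dne[of s]
      by (intro differentiable_divide differentiable_mult dr dD differentiable_const) simp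
    show ?thesis unfolding yform
      by (intro differentiable_add differentiable_scaleR a b differentiable_const)
  qed
  have dw: "(\<lambda>s. w s $ j) differentiable (at s)" for s j
  proof -
    have "Om differentiable (at (y s))" using Om_deriv[OF yin] by (rule differentiableI)
    then have "(Om \<circ> y) differentiable (at s)" by (rule differentiable_chain_at[OF dy])
    moreover have "(\<lambda>v::real^2. v $ j) differentiable (at ((Om \<circ> y) s))"
      by (rule bounded_linear_imp_differentiable[OF bounded_linear_vec_nth])
    ultimately have "((\<lambda>v::real^2. v $ j) \<circ> (Om \<circ> y)) differentiable (at s)"
      by (rule differentiable_chain_at)
    then show ?thesis by (simp add: w_def o_def)
  qed
  have dO: "(\<lambda>s. Oc s $ i) differentiable (at s)" for s i
  proof -
    have i: "i = 1 \<or> i = 2" using exhaust_2 by blast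
    have "(\<lambda>s. Oc s $ 1) differentiable (at s)"
      unfolding O1 using mu Bd Dne
      by (intro differentiable_divide differentiable_mult differentiable_const dD dw) auto
    moreover have "(\<lambda>s. Oc s $ 2) differentiable (at s)"
      unfolding O2 using mu Bd Dne
      by (intro differentiable_add differentiable_divide differentiable_mult differentiable_const dD dw dB) auto
    ultimately show ?thesis using i by blast
  qed
  define d where "d r = (\<chi> i. deriv (\<lambda>s. Oc s $ i) r)" for r
  have Hinv: "invertible (Heps mu Bd B Delta r (rho t r))" for r
    using Heps_invertible[OF mu Bd _ inside[rule_format]] Dpos by blast
  have cur: "current Gam mu Bd B Delta (rho t) r = 0 \<longleftrightarrow> d r = 0" for r
  proof
    assume "current Gam mu Bd B Delta (rho t) r = 0"
    then have "matrix_inv (Heps mu Bd B Delta r (rho t r)) *v d r = 0"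
      using Gam by (simp add: current_def d_def Oc_def)
    then show "d r = 0" using matrix_inv_zero[OF Hinv] by blast
  next
    assume "d r = 0"
    then show "current Gam mu Bd B Delta (rho t) r = 0"
      by (simp add: current_def d_def[symmetric] Oc_def[symmetric])
  qed
  have iff: "(\<forall>r. current Gam mu Bd B Delta (rho t) r = 0) \<longleftrightarrow>
            ((\<exists>c. \<forall>r. Oc r $ 1 = c) \<and> (\<exists>c. \<forall>r. Oc r $ 2 = c))"
  proof
    assume "\<forall>r. current Gam mu Bd B Delta (rho t) r = 0"
    then have "\<forall>r. d r = 0" using cur by blast
    then have "deriv (\<lambda>s. Oc s $ i) r = 0" for i r
      by (simp add: d_def vec_eq_iff)
    then show "(\<exists>c. \<forall>r. Oc r $ 1 = c) \<and> (\<exists>c. \<forall>r. Oc r $ 2 = c)"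
      using const_of_deriv0[OF dO] by blast
  next
    assume "(\<exists>c. \<forall>r. Oc r $ 1 = c) \<and> (\<exists>c. \<forall>r. Oc r $ 2 = c)"
    then obtain c1 c2 where c: "\<forall>r. Oc r $ 1 = c1" "\<forall>r. Oc r $ 2 = c2" by blast
    then have "(\<lambda>s. Oc s $ 1) = (\<lambda>s. c1)" "(\<lambda>s. Oc s $ 2) = (\<lambda>s. c2)" by auto
    then have "d r = 0" for r by (simp add: d_def vec_eq_iff forall_2)
    then show "\<forall>r. current Gam mu Bd B Delta (rho t) r = 0" using cur by blast
  qed
  have part2: "(\<forall>r0 r.
               w r $ 1 = w r0 $ 1 * (Delta r / Delta r0)
             \<and> w r $ 2 = (w r0 $ 2 - ((B r - B r0) / Bd) * w r0 $ 1) * (Delta r / Delta r0))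
          \<and> ((\<exists>d. \<forall>r. Delta r = d) \<longrightarrow> (\<exists>c. \<forall>r. w r $ 1 = c))"
    if "\<forall>r. current Gam mu Bd B Delta (rho t) r = 0"
  proof -
    have "(\<exists>c. \<forall>r. Oc r $ 1 = c) \<and> (\<exists>c. \<forall>r. Oc r $ 2 = c)" using iff that by (rule iffD1)
    then obtain c1 c2 where c: "\<And>r. Oc r $ 1 = c1" "\<And>r. Oc r $ 2 = c2" by blast
    have w1: "w r $ 1 = c1 * (Bd * (mu * Delta r))" for r
    proof -
      have "Bd * (mu * Delta r) \<noteq> 0" using mu Bd Dne[of r] by simp
      then show ?thesis using c(1)[of r] O1[of r] by (simp add: divide_eq_eq)
    qed
    have w2: "w r $ 2 = c2 * (mu * Delta r) - B r * c1 * (mu * Delta r)" for r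
    proof -
      have "mu * Delta r \<noteq> 0" using mu Bd Dne[of r] by simp
      then have "B r * w r $ 1 / Bd + w r $ 2 = c2 * (mu * Delta r)"
        using c(2)[of r] O2[of r] by (simp add: divide_eq_eq)
      then show ?thesis unfolding w1 using Bd by (simp add: field_simps)
    qed
    have A: "w r $ 1 = w r0 $ 1 * (Delta r / Delta r0)" for r r0
      unfolding w1 using Dne[of r0] by (simp add: field_simps)
    have Bq: "w r $ 2 = (w r0 $ 2 - ((B r - B r0) / Bd) * w r0 $ 1) * (Delta r / Delta r0)" for r r0
      unfolding w1 w2 using Dne[of r0] Bd by (simp add: field_simps)
    have C: "\<exists>c. \<forall>r. w r $ 1 = c" if dd: "\<exists>d. \<forall>r. Delta r = d"
    proof -
      obtain d where "\<forall>r. Delta r = d" using dd by blast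
      then show ?thesis unfolding w1 by auto
    qed
    show ?thesis using A Bq C by blast
  qed
  have stat: "((\<lambda>s. rho s r) has_vector_derivative 0) (at t)"
    if "\<forall>r. current Gam mu Bd B Delta (rho t) r = 0" for r
  proof -
    have "(\<lambda>r'. current Gam mu Bd B Delta (rho t) r' $ i) = (\<lambda>r'. 0)" for i
      using that by auto
    then have "(\<chi> i. - deriv (\<lambda>r'. current Gam mu Bd B Delta (rho t) r' $ i) r) = 0"
      by (simp add: vec_eq_iff)
    then show ?thesis using dyn by metis
  qed
  have tanh_all: "\<forall>r. let y = Pmat mu Bd B Delta r *v rho t r; w = Omegae y in
                 (if w = 0 then y = 0 else y = - (tanh (norm w) / norm w) *\<^sub>R w)"
  proof
    fix r
    show "let y = Pmat mu Bd B Delta r *v rho t r; w = Omegae y in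
                 (if w = 0 then y = 0 else y = - (tanh (norm w) / norm w) *\<^sub>R w)"
      using tanh_part[OF inside[rule_format, of r]] unfolding Let_def Omegae_eq[OF inside[rule_format, of r]] .
  qed
  show ?thesis
    unfolding Oc_def[symmetric] Oe
  proof (intro conjI impI)
    show "(\<forall>r. current Gam mu Bd B Delta (rho t) r = 0) = ((\<exists>c. \<forall>r. Oc r $ 1 = c) \<and> (\<exists>c. \<forall>r. Oc r $ 2 = c))"
      by (rule iff)
  qed (use part2 stat tanh_all in \<open>simp_all add: Oe\<close>)
qed

end
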